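(* Let $\bm{X}\in\mathbb{R}^{n_1\times r}$, $\bm{Y}\in\mathbb{R}^{n_2\times r}$, and let $\bm{X}_\star,\bm{Y}_\star$ be the ground-truth factors (see context). Suppose there exist a matrix $\bm{P}\in\mathbb{R}^{r\times r}$ with $1/2\le\sigma_r(\bm{P})\le\sigma_1(\bm{P})\le3/2$ and a number $\delta$ such that \[ \max\big\{\|\bm{X}\bm{P}-\bm{X}_\star\|_{\mathrm{F}},\ \|\bm{Y}\bm{P}^{-\top}-\bm{Y}_\star\|_{\mathrm{F}}\big\}\le\delta\le\frac{\sigma_r(\bm{X}_\star)}{80}. \] Then the minimum of $g(\bm{Q})=\|\bm{X}\bm{Q}-\bm{X}_\star\|_{\mathrm{F}}^2+\|\bm{Y}\bm{Q}^{-\top}-\bm{Y}_\star\|_{\mathrm{F}}^2$ over invertible $\bm{Q}\in\mathbb{R}^{r\times r}$ is attained, and a minimizer $\bm{Q}$ (the optimal alignment matrix) satisfies \[ \|\bm{P}-\bm{Q}\|\le\|\bm{P}-\bm{Q}\|_{\mathrm{F}}\le\frac{5\delta}{\sigma_r(\bm{X}_\star)}. \]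
   Context: $\bm{M}_\star\in\mathbb{R}^{n_1\times n_2}$ has rank $r$ and compact SVD $\bm{M}_\star=\bm{U}_\star\bm{\Sigma}_\star\bm{V}_\star^\top$; $\bm{X}_\star=\bm{U}_\star\bm{\Sigma}_\star^{1/2}$, $\bm{Y}_\star=\bm{V}_\star\bm{\Sigma}_\star^{1/2}$. $\sigma_k(\cdot)$ denotes the $k$th largest singular value, $\|\cdot\|$ the spectral norm, and $\bm{P}^{-\top}=(\bm{P}^{-1})^\top$. *)

theory Defs
  imports "HOL-Analysis.Analysis"
begin

text \<open>Matrices are elements of real^'c^'m (m rows, c columns). The HOL-Analysis norm on
  real^'c^'m is the Frobenius norm. The spectral norm is the operator norm of x maps to A x.\<close>

definition spec_norm :: "real^'c^'m \<Rightarrow> real" where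
  "spec_norm A = onorm (\<lambda>x. A *v x)"

text \<open>k-th largest singular value (k >= 1), via the Courant-Fischer max-min formula:
  sigma_k(A) = max over k-dimensional subspaces S of min over unit x in S of the norm of A x.
  (For k beyond min(rows, cols) this gives 0, the usual convention.)\<close>

definition sing_val :: "nat \<Rightarrow> real^'c^'m \<Rightarrow> real" where
  "sing_val k A = Sup {Inf {norm (A *v x) | x. x \<in> S \<and> norm x = 1} | S.
        subspace S \<and> dim S = k}"

definition diag_mat :: "('r::finite \<Rightarrow> real) \<Rightarrow> real^'r^'r" where
  "diag_mat s = (\<chi> i j. if i = j then s i else 0)"

end

theory Submission imports Defs begin

lemma mm_diff_l: "(A::real^'n^'m) ** (B - C) = A ** B - A ** C"
  by (simp add: matrix_matrix_mult_def vec_eq_iff sum_subtractf algebra_simps)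

lemma mm_diff_r: "((A::real^'n^'m) - B) ** C = A ** C - B ** C"
  by (simp add: matrix_matrix_mult_def vec_eq_iff sum_subtractf algebra_simps)

lemma mm_add_r: "((A::real^'n^'m) + B) ** C = A ** C + B ** C"
  by (simp add: matrix_matrix_mult_def vec_eq_iff sum.distrib algebra_simps)

lemma column_mm: "column j ((A::real^'n^'m) ** B) = A *v column j B"
  by (simp add: column_def matrix_matrix_mult_def matrix_vector_mult_def vec_eq_iff)

lemma frob_sq: "norm (B::real^'c^'m) ^ 2 = (\<Sum>i\<in>UNIV. \<Sum>j\<in>UNIV. (B$i$j)^2)"
  unfolding power2_norm_eq_inner by (simp add: inner_vec_def power2_eq_square)

lemma vnorm_sq: "norm (v::real^'c) ^ 2 = (\<Sum>j\<in>UNIV. (v$j)^2)"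
  unfolding power2_norm_eq_inner by (simp add: inner_vec_def power2_eq_square)

lemma frob_cols: "norm (B::real^'c^'m) ^ 2 = (\<Sum>j\<in>UNIV. norm (column j B) ^ 2)"
  unfolding frob_sq vnorm_sq column_def by (subst sum.swap) simp

lemma frob_transpose: "norm (transpose (B::real^'c^'m)) = norm B"
proof -
  have "norm (transpose B) ^ 2 = norm B ^ 2"
    unfolding frob_sq transpose_def by (subst sum.swap) simp
  then show ?thesis by (simp add: power2_eq_iff_nonneg)
qed

lemma mv_le_frob: "norm ((A::real^'c^'m) *v v) \<le> norm A * norm v"
proof -
  have "norm (A *v v) ^ 2 = (\<Sum>i\<in>UNIV. (A$i \<bullet> v)^2)"
    unfolding vnorm_sq by (simp add: matrix_vector_mult_def inner_vec_def)
  also have "\<dots> \<le> (\<Sum>i\<in>UNIV. norm (A$i)^2 * norm v ^ 2)"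
  proof (rule sum_mono)
    fix i
    have "\<bar>A$i \<bullet> v\<bar> \<le> norm (A$i) * norm v" by (rule Cauchy_Schwarz_ineq2)
    then have "\<bar>A$i \<bullet> v\<bar>^2 \<le> (norm (A$i) * norm v)^2"
      by (metis abs_ge_zero power_mono)
    then show "(A$i \<bullet> v)^2 \<le> norm (A$i)^2 * norm v ^ 2" by (simp add: power_mult_distrib)
  qed
  also have "\<dots> = (norm A * norm v)^2"
  proof -
    have "norm A ^2 = (\<Sum>i\<in>UNIV. norm (A$i)^2)"
      unfolding power2_norm_eq_inner by (simp add: inner_vec_def)
    then show ?thesis by (simp add: power_mult_distrib sum_distrib_right)
  qed
  finally show ?thesis by (rule power2_le_imp_le) simp
qed

lemma frob_lower:
  fixes A :: "real^'n^'m" and B :: "real^'c^'n"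
  assumes "\<And>v. c * norm v \<le> norm (A *v v)"
  shows "c * norm B \<le> norm (A ** B)"
proof (cases "c \<ge> 0")
  case True
  have "(c * norm B)^2 = (\<Sum>j\<in>UNIV. (c * norm (column j B)) ^ 2)"
    by (simp add: power_mult_distrib frob_cols sum_distrib_left)
  also have "\<dots> \<le> (\<Sum>j\<in>UNIV. norm (column j (A ** B)) ^ 2)"
    unfolding column_mm
    by (rule sum_mono, rule power_mono[OF assms], simp add: True)
  also have "\<dots> = norm (A ** B) ^ 2" by (simp add: frob_cols)
  finally show ?thesis by (rule power2_le_imp_le) simp
next
  case False
  then have "c * norm B \<le> 0" by (simp add: mult_nonpos_nonneg)
  then show ?thesis using norm_ge_zero[of "A ** B"] by linarith
qed

lemma frob_upper:
  fixes A :: "real^'n^'m" and B :: "real^'c^'n"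
  assumes "\<And>v. norm (A *v v) \<le> c * norm v" and "c \<ge> 0"
  shows "norm (A ** B) \<le> c * norm B"
proof -
  have "norm (A ** B) ^ 2 = (\<Sum>j\<in>UNIV. norm (column j (A ** B)) ^ 2)" by (simp add: frob_cols)
  also have "\<dots> \<le> (\<Sum>j\<in>UNIV. (c * norm (column j B)) ^ 2)"
    unfolding column_mm
    by (rule sum_mono, rule power_mono[OF assms(1)], simp)
  also have "\<dots> = (c * norm B)^2"
    by (simp add: power_mult_distrib frob_cols sum_distrib_left)
  finally show ?thesis by (rule power2_le_imp_le) (simp add: assms(2))
qed

lemma frob_submult: "norm ((A::real^'n^'m) ** (B::real^'c^'n)) \<le> norm A * norm B"
  by (rule frob_upper[OF mv_le_frob], simp)

lemma inv_props:
  fixes A :: "real^'n^'n"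
  assumes "invertible A"
  shows "A ** matrix_inv A = mat 1" "matrix_inv A ** A = mat 1"
  using someI_ex[OF assms[unfolded invertible_def]] unfolding matrix_inv_def by auto

lemma inv_unique:
  fixes A B :: "real^'n^'n"
  assumes "A ** B = mat 1"
  shows "invertible A" "matrix_inv A = B"
proof -
  show inv: "invertible A" using assms invertible_right_inverse by blast
  have "matrix_inv A = matrix_inv A ** (A ** B)" using assms by simp
  also have "\<dots> = B" by (simp add: matrix_mul_assoc inv_props[OF inv])
  finally show "matrix_inv A = B" .
qed

lemma orth_norm:
  fixes U :: "real^'r^'n"
  assumes "transpose U ** U = mat 1"
  shows "norm (U *v y) = norm y"
proof -
  have "norm (U *v y) ^ 2 = (U *v y) \<bullet> (U *v y)" by (simp add: power2_norm_eq_inner)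
  also have "\<dots> = (y v* transpose U) \<bullet> (U *v y)" by simp
  also have "\<dots> = y \<bullet> (transpose U *v (U *v y))" by (rule dot_lmul_matrix)
  also have "\<dots> = y \<bullet> ((transpose U ** U) *v y)" by (simp only: matrix_vector_mul_assoc)
  also have "\<dots> = norm y ^ 2" using assms by (simp add: power2_norm_eq_inner)
  finally show ?thesis by (simp add: power2_eq_iff_nonneg)
qed


lemma sv_full:
  fixes A :: "real^'r::finite^'m::finite"
  shows "sing_val CARD('r) A = Inf {norm (A *v x) | x. norm x = 1}"
proof -
  have "subspace S \<and> dim S = CARD('r) \<longleftrightarrow> S = UNIV" for S :: "(real^'r) set"
  proof
    assume H: "subspace S \<and> dim S = CARD('r)"
    then have "span S = UNIV" using dim_eq_full[of S] by simp
    moreover have "span S = S" using H span_eq_iff by blast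
    ultimately show "S = UNIV" by simp
  next
    assume "S = UNIV" then show "subspace S \<and> dim S = CARD('r)" by (simp add: subspace_UNIV)
  qed
  then have "{Inf {norm (A *v x) | x. x \<in> S \<and> norm x = 1} | S. subspace S \<and> dim S = CARD('r)}
      = {Inf {norm (A *v x) | x. norm x = 1}}" by auto
  then show ?thesis unfolding sing_val_def by simp
qed

lemma sv_lower:
  fixes A :: "real^'r::finite^'m::finite"
  shows "sing_val CARD('r) A * norm x \<le> norm (A *v x)"
proof (cases "x = 0")
  case True then show ?thesis by simp
next
  case False
  let ?u = "(1 / norm x) *\<^sub>R x"
  have nu: "norm ?u = 1" using False by simp
  have "sing_val CARD('r) A \<le> norm (A *v ?u)"
    unfolding sv_full by (rule cInf_lower) (use nu in \<open>auto intro: bdd_belowI[where m=0]\<close>)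
  also have "\<dots> = norm (A *v x) / norm x" by (simp add: matrix_vector_mult_scaleR)
  finally show ?thesis using False by (simp add: pos_le_divide_eq)
qed

lemma sv_ge:
  fixes A :: "real^'r::finite^'m::finite"
  assumes "\<And>x. norm x = 1 \<Longrightarrow> c \<le> norm (A *v x)"
  shows "c \<le> sing_val CARD('r) A"
  unfolding sv_full
proof (rule cInf_greatest)
  show "{norm (A *v x) |x. norm x = 1} \<noteq> {}"
    using norm_axis_1[of undefined] by blast
qed (use assms in auto)

lemma sv_one_upper:
  fixes P :: "real^'r::finite^'m::finite"
  assumes "sing_val 1 P \<le> c"
  shows "norm (P *v x) \<le> c * norm x"
proof -
  let ?T = "{Inf {norm (P *v x) | x. x \<in> S \<and> norm x = 1} | S::(real^'r) set. subspace S \<and> dim S = 1}"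
  have bdd: "bdd_above ?T"
  proof (rule bdd_aboveI)
    fix t assume "t \<in> ?T"
    then obtain S :: "(real^'r) set" where S: "subspace S" "dim S = 1"
      and t: "t = Inf {norm (P *v x) | x. x \<in> S \<and> norm x = 1}" by blast
    then obtain y where y: "y \<in> S" "y \<noteq> 0" using dim_eq_0[of S] by auto
    let ?z = "(1 / norm y) *\<^sub>R y"
    have z: "?z \<in> S" "norm ?z = 1" using y S by (auto simp: subspace_scale)
    have "t \<le> norm (P *v ?z)" unfolding t
      by (rule cInf_lower) (use z in \<open>auto intro: bdd_belowI[where m=0]\<close>)
    also have "\<dots> \<le> norm P * norm ?z" by (rule mv_le_frob)
    finally show "t \<le> norm P" using z by simp
  qed
  have unit: "norm (P *v u) \<le> c" if u: "norm u = 1" for u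
  proof -
    have u0: "u \<noteq> 0" using u by auto
    have "{norm (P *v x) | x. x \<in> span {u} \<and> norm x = 1} = {norm (P *v u)}"
    proof (rule set_eqI, rule iffI)
      fix t assume "t \<in> {norm (P *v x) | x. x \<in> span {u} \<and> norm x = 1}"
      then obtain k where "t = norm (P *v (k *\<^sub>R u))" "norm (k *\<^sub>R u) = 1"
        by (auto simp: span_singleton)
      then show "t \<in> {norm (P *v u)}" using u by (simp add: matrix_vector_mult_scaleR)
    next
      fix t assume "t \<in> {norm (P *v u)}"
      then show "t \<in> {norm (P *v x) | x. x \<in> span {u} \<and> norm x = 1}"
        using u by (auto intro: span_base)
    qed
    then have eq: "Inf {norm (P *v x) | x. x \<in> span {u} \<and> norm x = 1} = norm (P *v u)" by simp
    have "span {u} \<in> {S. subspace S \<and> dim S = 1}"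
      using u0 by (simp add: dim_span dim_singleton subspace_span)
    then have "norm (P *v u) \<in> ?T" unfolding mem_Collect_eq
      by (intro exI[of _ "span {u}"]) (use eq in auto)
    then have "norm (P *v u) \<le> Sup ?T" using bdd by (rule cSup_upper)
    then show ?thesis using assms unfolding sing_val_def by simp
  qed
  show ?thesis
  proof (cases "x = 0")
    case True then show ?thesis by simp
  next
    case False
    have "norm (P *v ((1 / norm x) *\<^sub>R x)) \<le> c" by (rule unit) (use False in simp)
    then show ?thesis using False by (simp add: matrix_vector_mult_scaleR pos_divide_le_eq mult.commute)
  qed
qed

lemma diag_mv: "diag_mat d *v x = (\<chi> i. d i * x$i)"
unfolding vec_eq_iff
proof (intro allI)
  fix i
  have "(\<Sum>j\<in>UNIV. (if i = j then d i else 0) * x$j) = (\<Sum>j\<in>UNIV. if i = j then d i * x$j else 0)"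
    by (rule sum.cong) auto
  then show "(diag_mat d *v x) $ i = (\<chi> i. d i * x$i) $ i"
    by (simp add: diag_mat_def matrix_vector_mult_def)
qed

lemma diag_lower:
  fixes s :: "'r::finite \<Rightarrow> real"
  assumes "\<forall>i. s i > 0"
  shows "\<exists>m>0. \<forall>x. m * norm x \<le> norm (diag_mat (\<lambda>i. sqrt (s i)) *v x)"
proof -
  define m where "m = Min (range s)"
  have mpos: "m > 0" unfolding m_def using Min_in[of "range s"] assms by auto
  have mle: "m \<le> s i" for i unfolding m_def by (rule Min_le) auto
  have "(sqrt m * norm x)^2 \<le> norm (diag_mat (\<lambda>i. sqrt (s i)) *v x) ^ 2" for x
  proof -
    have "(sqrt m * norm x)^2 = (\<Sum>i\<in>UNIV. m * (x$i)^2)"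
      using mpos by (simp add: power_mult_distrib vnorm_sq sum_distrib_left)
    also have "\<dots> \<le> (\<Sum>i\<in>UNIV. s i * (x$i)^2)"
      by (rule sum_mono, rule mult_right_mono[OF mle], simp)
    also have "\<dots> = norm (diag_mat (\<lambda>i. sqrt (s i)) *v x) ^ 2"
      using assms by (simp add: vnorm_sq diag_mv power_mult_distrib less_imp_le)
    finally show ?thesis .
  qed
  then have "sqrt m * norm x \<le> norm (diag_mat (\<lambda>i. sqrt (s i)) *v x)" for x
    by (rule power2_le_imp_le) simp
  then show ?thesis using mpos by (intro exI[of _ "sqrt m"]) auto
qed

lemma lemma1_aux:
  fixes U :: "real^'r::finite^'n1::finite"
    and V :: "real^'r^'n2::finite"
    and s :: "'r \<Rightarrow> real"
    and Xs X :: "real^'r^'n1"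
    and Ys Y :: "real^'r^'n2"
    and P :: "real^'r^'r"
    and \<delta> :: real
  assumes U_orth: "transpose U ** U = mat 1"
    and V_orth: "transpose V ** V = mat 1"
    and s_pos: "\<forall>i. s i > 0"
    and Xs_def: "Xs = U ** diag_mat (\<lambda>i. sqrt (s i))"
    and Ys_def: "Ys = V ** diag_mat (\<lambda>i. sqrt (s i))"
    and P_inv: "invertible P"
    and P_lo: "1/2 \<le> sing_val CARD('r) P"
    and P_hi: "sing_val 1 P \<le> 3/2"
    and close: "max (norm (X ** P - Xs)) (norm (Y ** transpose (matrix_inv P) - Ys)) \<le> \<delta>"
    and delta_small: "\<delta> \<le> sing_val CARD('r) Xs / 80"
  shows "(\<exists>Q::real^'r^'r. invertible Q \<and>
            (\<forall>Q'::real^'r^'r. invertible Q' \<longrightarrow>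
               (norm (X ** Q - Xs))\<^sup>2 + (norm (Y ** transpose (matrix_inv Q) - Ys))\<^sup>2
               \<le> (norm (X ** Q' - Xs))\<^sup>2 + (norm (Y ** transpose (matrix_inv Q') - Ys))\<^sup>2))
       \<and> (\<forall>Q::real^'r^'r. invertible Q \<and>
            (\<forall>Q'::real^'r^'r. invertible Q' \<longrightarrow>
               (norm (X ** Q - Xs))\<^sup>2 + (norm (Y ** transpose (matrix_inv Q) - Ys))\<^sup>2
               \<le> (norm (X ** Q' - Xs))\<^sup>2 + (norm (Y ** transpose (matrix_inv Q') - Ys))\<^sup>2)
            \<longrightarrow> spec_norm (P - Q) \<le> norm (P - Q)
              \<and> norm (P - Q) \<le> 5 * \<delta> / sing_val CARD('r) Xs)"
proof -
  define \<sigma> where "\<sigma> = sing_val CARD('r) Xs"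
  define D0 where "D0 = diag_mat (\<lambda>i. sqrt (s i))"
  have XsD: "norm (Xs *v x) = norm (D0 *v x)" for x
    unfolding Xs_def D0_def matrix_vector_mul_assoc[symmetric] by (rule orth_norm[OF U_orth])
  have YsD: "norm (Ys *v x) = norm (D0 *v x)" for x
    unfolding Ys_def D0_def matrix_vector_mul_assoc[symmetric] by (rule orth_norm[OF V_orth])
  obtain m where m: "m > 0" "\<And>x. m * norm x \<le> norm (D0 *v x)"
    using diag_lower[OF s_pos] unfolding D0_def by blast
  have "m \<le> \<sigma>" unfolding \<sigma>_def
    by (rule sv_ge) (use m XsD in \<open>metis mult.right_neutral\<close>)
  then have \<sigma>pos: "\<sigma> > 0" using m by simp
  have lowX: "\<sigma> * norm v \<le> norm (Xs *v v)" for v unfolding \<sigma>_def by (rule sv_lower)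
  have lowY: "\<sigma> * norm v \<le> norm (Ys *v v)" for v using lowX[of v] XsD YsD by simp
  have Phi: "norm (P *v v) \<le> 3/2 * norm v" for v by (rule sv_one_upper[OF P_hi])
  define E where "E = X ** P - Xs"
  define Pi where "Pi = matrix_inv P"
  define F where "F = Y ** transpose Pi - Ys"
  have nE: "norm E \<le> \<delta>" using close unfolding E_def by simp
  have nF: "norm F \<le> \<delta>" using close unfolding F_def Pi_def by simp
  have d0: "0 \<le> \<delta>" using nE norm_ge_zero[of E] by linarith
  have dsm: "\<delta> \<le> \<sigma> / 80" using delta_small unfolding \<sigma>_def .
  have PPi: "P ** Pi = mat 1" "Pi ** P = mat 1" unfolding Pi_def using inv_props[OF P_inv] by auto
  have XP: "X ** P = Xs + E" unfolding E_def by simp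
  have tPiP: "transpose Pi ** transpose P = mat 1"
    using PPi by (metis matrix_transpose_mul transpose_mat)
  have Yeq: "Y = (Ys + F) ** transpose P"
  proof -
    have "Y = Y ** (transpose Pi ** transpose P)" using tPiP by simp
    also have "\<dots> = (Ys + F) ** transpose P" unfolding F_def by (simp add: matrix_mul_assoc)
    finally show ?thesis .
  qed
  have lowXE: "(\<sigma> - \<delta>) * norm v \<le> norm ((Xs + E) *v v)" for v
  proof -
    have "norm (E *v v) \<le> \<delta> * norm v"
      using mv_le_frob[of E v] nE by (meson mult_right_mono norm_ge_zero order_trans)
    moreover have "norm (Xs *v v) - norm (E *v v) \<le> norm ((Xs + E) *v v)"
      by (simp add: matrix_vector_mult_add_rdistrib) (metis norm_diff_ineq add.commute diff_minus_eq_add norm_minus_cancel)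
    ultimately show ?thesis using lowX[of v] by (simp add: algebra_simps)
  qed
  have lowYF: "(\<sigma> - \<delta>) * norm v \<le> norm ((Ys + F) *v v)" for v
  proof -
    have "norm (F *v v) \<le> \<delta> * norm v"
      using mv_le_frob[of F v] nF by (meson mult_right_mono norm_ge_zero order_trans)
    moreover have "norm (Ys *v v) - norm (F *v v) \<le> norm ((Ys + F) *v v)"
      by (simp add: matrix_vector_mult_add_rdistrib) (metis norm_diff_ineq add.commute diff_minus_eq_add norm_minus_cancel)
    ultimately show ?thesis using lowY[of v] by (simp add: algebra_simps)
  qed
  have sd: "\<sigma> - \<delta> \<ge> 79/80 * \<sigma>" using dsm by simp
  have sdpos: "\<sigma> - \<delta> > 0" using sd \<sigma>pos by simp
  define g where "g = (\<lambda>Q::real^'r^'r. (norm (X ** Q - Xs))\<^sup>2 + (norm (Y ** transpose (matrix_inv Q) - Ys))\<^sup>2)"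
  have gP: "g P \<le> 2 * \<delta>\<^sup>2"
  proof -
    have "(norm E)^2 \<le> \<delta>^2" "(norm F)^2 \<le> \<delta>^2" using nE nF by (simp_all add: power_mono)
    then show ?thesis unfolding g_def E_def F_def Pi_def by simp
  qed
  define bR where "bR = (3/2 * \<delta> + norm Ys) / (\<sigma> - \<delta>) * norm Pi"
  have key: "norm (Q - P) \<le> 5 * \<delta> / \<sigma> \<and> norm (matrix_inv Q) \<le> bR"
    if Qi: "invertible Q" and gQ: "g Q \<le> g P" for Q
  proof -
    define R where "R = matrix_inv Q"
    have QR: "Q ** R = mat 1" "R ** Q = mat 1" unfolding R_def using inv_props[OF Qi] by auto
    have sq: "a \<le> 3/2 * \<delta>" if "a \<ge> 0" "a^2 \<le> g Q" for a
    proof -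
      have "(3/2 * \<delta>)^2 = 9/4 * \<delta>^2" by (simp add: power2_eq_square)
      moreover have "0 \<le> \<delta>^2" by simp
      ultimately have "a^2 \<le> (3/2 * \<delta>)^2" using that gQ gP by linarith
      then show ?thesis by (rule power2_le_imp_le) (use d0 in simp)
    qed
    have a1: "norm (X ** Q - Xs) \<le> 3/2 * \<delta>" by (rule sq) (auto simp: g_def)
    have a2: "norm (Y ** transpose R - Ys) \<le> 3/2 * \<delta>" by (rule sq) (auto simp: g_def R_def)
    define M where "M = Pi ** (Q - P)"
    have PM: "P ** M = Q - P" unfolding M_def by (simp add: matrix_mul_assoc PPi)
    have "X ** (Q - P) = (Xs + E) ** M" using PM XP by (metis matrix_mul_assoc)
    moreover have "X ** (Q - P) = (X ** Q - Xs) - (X ** P - Xs)" by (simp add: mm_diff_l)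
    ultimately have eqXM: "(Xs + E) ** M = (X ** Q - Xs) - E" unfolding E_def by simp
    have "norm ((X ** Q - Xs) - E) \<le> norm (X ** Q - Xs) + norm E" by (rule norm_triangle_ineq4)
    then have "norm ((Xs + E) ** M) \<le> 3/2 * \<delta> + \<delta>" using a1 nE unfolding eqXM by linarith
    then have m1: "(\<sigma> - \<delta>) * norm M \<le> 5/2 * \<delta>"
      using frob_lower[of "\<sigma> - \<delta>" "Xs + E" M, OF lowXE] by simp
    have n1: "norm (Q - P) \<le> 3/2 * norm M" unfolding PM[symmetric]
      by (rule frob_upper[OF Phi]) simp
    have "(\<sigma> - \<delta>) * norm (Q - P) \<le> (\<sigma> - \<delta>) * (3/2 * norm M)"
      by (rule mult_left_mono[OF n1]) (use sdpos in simp)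
    also have "\<dots> = 3/2 * ((\<sigma> - \<delta>) * norm M)" by simp
    also have "\<dots> \<le> 3/2 * (5/2 * \<delta>)" using m1 by linarith
    finally have c1: "(\<sigma> - \<delta>) * norm (Q - P) \<le> 15/4 * \<delta>" by simp
    have c2: "(79/80 * \<sigma>) * norm (Q - P) \<le> (\<sigma> - \<delta>) * norm (Q - P)"
      by (rule mult_right_mono[OF sd]) simp
    have "79/80 * (\<sigma> * norm (Q - P)) \<le> 15/4 * \<delta>" using c1 c2 by (simp add: mult.assoc)
    then have "\<sigma> * norm (Q - P) \<le> 5 * \<delta>" using d0 by linarith
    then have part1: "norm (Q - P) \<le> 5 * \<delta> / \<sigma>" using \<sigma>pos by (simp add: pos_le_divide_eq mult.commute)
    have "Y ** transpose R = ((Ys + F) ** transpose P) ** transpose R"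
      by (simp only: Yeq[symmetric])
    also have "\<dots> = (Ys + F) ** (transpose P ** transpose R)" by (simp only: matrix_mul_assoc)
    also have "transpose P ** transpose R = transpose (R ** P)" by (simp only: matrix_transpose_mul)
    finally have YR: "Y ** transpose R = (Ys + F) ** transpose (R ** P)" .
    have "norm (Y ** transpose R) \<le> norm Ys + norm (Y ** transpose R - Ys)" by (rule norm_triangle_sub)
    then have "norm (Y ** transpose R) \<le> 3/2 * \<delta> + norm Ys" using a2 by linarith
    then have "(\<sigma> - \<delta>) * norm (R ** P) \<le> 3/2 * \<delta> + norm Ys"
      using frob_lower[of "\<sigma> - \<delta>" "Ys + F" "transpose (R ** P)", OF lowYF] YR
      by (simp add: frob_transpose)
    then have nRP: "norm (R ** P) \<le> (3/2 * \<delta> + norm Ys) / (\<sigma> - \<delta>)"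
      using sdpos by (simp add: pos_le_divide_eq mult.commute)
    have eqR: "(R ** P) ** Pi = R" by (simp add: matrix_mul_assoc[symmetric] PPi)
    have "norm ((R ** P) ** Pi) \<le> norm (R ** P) * norm Pi" by (rule frob_submult)
    then have "norm R \<le> norm (R ** P) * norm Pi" unfolding eqR .
    also have "\<dots> \<le> bR" unfolding bR_def by (rule mult_right_mono[OF nRP]) simp
    finally have nR: "norm R \<le> bR" .
    have nR2: "norm (matrix_inv Q) \<le> bR" using nR by (simp only: R_def)
    show ?thesis by (rule conjI[OF part1 nR2])
  qed
  have PiB: "norm Pi \<le> bR" using key[OF P_inv] unfolding Pi_def by simp
  define D where "D = {z::(real^'r^'r) \<times> (real^'r^'r). fst z ** snd z = mat 1 \<and>
       norm (fst z - P) \<le> 5 * \<delta> / \<sigma> \<and> norm (snd z) \<le> bR}"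
  define G where "G = (\<lambda>z::(real^'r^'r) \<times> (real^'r^'r).
       (norm (X ** fst z - Xs))\<^sup>2 + (norm (Y ** transpose (snd z) - Ys))\<^sup>2)"
  have PD: "(P, Pi) \<in> D" unfolding D_def using PPi PiB d0 \<sigma>pos by simp
  have cmul: "continuous_on UNIV (\<lambda>z::(real^'r^'r) \<times> (real^'r^'r). fst z ** snd z)"
    unfolding matrix_matrix_mult_def by (intro continuous_intros)
  have "closed D"
  proof -
    have "D = {z. fst z ** snd z = mat 1} \<inter> {z. norm (fst z - P) \<le> 5 * \<delta> / \<sigma>} \<inter> {z. norm (snd z) \<le> bR}"
      unfolding D_def by auto
    moreover have "closed {z::(real^'r^'r) \<times> (real^'r^'r). fst z ** snd z = mat 1}"
      by (rule closed_Collect_eq[OF cmul]) (intro continuous_intros)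
    moreover have "closed {z::(real^'r^'r) \<times> (real^'r^'r). norm (fst z - P) \<le> 5 * \<delta> / \<sigma>}"
      by (rule closed_Collect_le) (intro continuous_intros)+
    moreover have "closed {z::(real^'r^'r) \<times> (real^'r^'r). norm (snd z) \<le> bR}"
      by (rule closed_Collect_le) (intro continuous_intros)+
    ultimately show ?thesis by (simp add: closed_Int)
  qed
  moreover have "bounded D"
    unfolding bounded_iff
  proof (intro exI ballI)
    fix z assume "z \<in> D"
    then have "norm (fst z - P) \<le> 5 * \<delta> / \<sigma>" "norm (snd z) \<le> bR" unfolding D_def by auto
    moreover have "norm (fst z) \<le> norm (fst z - P) + norm P" by (metis norm_triangle_sub add.commute)
    moreover have "norm z \<le> norm (fst z) + norm (snd z)" using norm_Pair_le[of "fst z" "snd z"] by simp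
    ultimately show "norm z \<le> 5 * \<delta> / \<sigma> + norm P + bR" by linarith
  qed
  ultimately have cD: "compact D" by (simp add: compact_eq_bounded_closed)
  have cG: "continuous_on D G"
    unfolding G_def matrix_matrix_mult_def transpose_def by (intro continuous_intros)
  obtain z0 where z0: "z0 \<in> D" "\<And>z. z \<in> D \<Longrightarrow> G z0 \<le> G z"
    using continuous_attains_inf[OF cD _ cG] PD by blast
  define Q0 where "Q0 = fst z0"
  have Q0R: "fst z0 ** snd z0 = mat 1" using z0(1) unfolding D_def by simp
  have Q0i: "invertible Q0" and Q0inv: "matrix_inv Q0 = snd z0"
    using inv_unique[OF Q0R] unfolding Q0_def by auto
  have GQ0: "G z0 = g Q0" unfolding G_def g_def Q0_def using Q0inv Q0_def by simp
  have Gg: "G (Q, matrix_inv Q) = g Q" for Q unfolding G_def g_def by simp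
  have min: "g Q0 \<le> g Q'" if "invertible Q'" for Q'
  proof (cases "g Q' \<le> g P")
    case True
    have "(Q', matrix_inv Q') \<in> D" unfolding D_def
      using key[OF that True] inv_props[OF that] by simp
    then show ?thesis using z0(2) GQ0 Gg by metis
  next
    case False
    have "G z0 \<le> G (P, Pi)" using z0(2)[OF PD] .
    then show ?thesis using GQ0 Gg[of P] False unfolding Pi_def by simp
  qed
  have ex: "\<exists>Q. invertible Q \<and> (\<forall>Q'. invertible Q' \<longrightarrow> g Q \<le> g Q')"
    using Q0i min by blast
  have all: "spec_norm (P - Q) \<le> norm (P - Q) \<and> norm (P - Q) \<le> 5 * \<delta> / \<sigma>"
    if "invertible Q" "\<forall>Q'. invertible Q' \<longrightarrow> g Q \<le> g Q'" for Q
  proof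
    show "spec_norm (P - Q) \<le> norm (P - Q)"
      unfolding spec_norm_def by (rule onorm_le) (rule mv_le_frob)
    have "g Q \<le> g P" using that P_inv by blast
    then show "norm (P - Q) \<le> 5 * \<delta> / \<sigma>" using key[OF that(1)] by (simp add: norm_minus_commute)
  qed
  show ?thesis using ex all unfolding g_def \<sigma>_def by blast
qed


theorem lemma1:
  fixes U :: "real^'r::finite^'n1::finite"
    and V :: "real^'r^'n2::finite"
    and s :: "'r \<Rightarrow> real"
    and Xs X :: "real^'r^'n1"
    and Ys Y :: "real^'r^'n2"
    and P :: "real^'r^'r"
    and \<delta> :: real
  assumes U_orth: "transpose U ** U = mat 1"
    and V_orth: "transpose V ** V = mat 1"
    and s_pos: "\<forall>i. s i > 0"
    and Xs_def: "Xs = U ** diag_mat (\<lambda>i. sqrt (s i))"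
    and Ys_def: "Ys = V ** diag_mat (\<lambda>i. sqrt (s i))"
    and P_inv: "invertible P"
    and P_lo: "1/2 \<le> sing_val CARD('r) P"
    and P_hi: "sing_val 1 P \<le> 3/2"
    and close: "max (norm (X ** P - Xs)) (norm (Y ** transpose (matrix_inv P) - Ys)) \<le> \<delta>"
    and delta_small: "\<delta> \<le> sing_val CARD('r) Xs / 80"
  shows "(\<exists>Q::real^'r^'r. invertible Q \<and>
            (\<forall>Q'::real^'r^'r. invertible Q' \<longrightarrow>
               (norm (X ** Q - Xs))\<^sup>2 + (norm (Y ** transpose (matrix_inv Q) - Ys))\<^sup>2
               \<le> (norm (X ** Q' - Xs))\<^sup>2 + (norm (Y ** transpose (matrix_inv Q') - Ys))\<^sup>2))
       \<and> (\<forall>Q::real^'r^'r. invertible Q \<and>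
            (\<forall>Q'::real^'r^'r. invertible Q' \<longrightarrow>
               (norm (X ** Q - Xs))\<^sup>2 + (norm (Y ** transpose (matrix_inv Q) - Ys))\<^sup>2
               \<le> (norm (X ** Q' - Xs))\<^sup>2 + (norm (Y ** transpose (matrix_inv Q') - Ys))\<^sup>2)
            \<longrightarrow> spec_norm (P - Q) \<le> norm (P - Q)
              \<and> norm (P - Q) \<le> 5 * \<delta> / sing_val CARD('r) Xs)"
  using assms by (rule lemma1_aux)

end
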